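(* If $\Bbbk$ is an algebraically closed field of characteristic zero, then $\mathcal O(\lambda)\cong\mathcal O(1)$ for all $\lambda\in\Bbbk^*$. If $\Bbbk=\mathbb R$, then $\mathcal O(\lambda)\cong\mathcal O(1)$ for $\lambda>0$ and $\mathcal O(\lambda)\cong\mathcal O(-1)$ for $\lambda<0$, but $\mathcal O(-1)\not\cong\mathcal O(1)$.
   Context: $\mathcal W$ is the Witt algebra over $\Bbbk$ with basis $L_n$ ($n\in\mathbb{Z}$) and $[L_n,L_m]=(n-m)L_{n+m}$. For $\lambda\in\Bbbk^*$, $\mathcal O(\lambda)$ is the subalgebra of $\mathcal W$ spanned by $L_n-\lambda^nL_{-n}$, $n\ge1$; $\mathcal O=\mathcal O(1)$. *)

theory Defs
  imports "HOL-Computational_Algebra.Polynomial"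
begin

text \<open>The Witt algebra over a field 'k: elements are finitely supported functions
  int \<Rightarrow> 'k (coefficients w.r.t. the basis L_n).\<close>

definition witt :: "(int \<Rightarrow> 'k::field) set" where
  "witt = {f. finite {n. f n \<noteq> 0}}"

definition wL :: "int \<Rightarrow> int \<Rightarrow> 'k::field" where
  "wL n = (\<lambda>m. if m = n then 1 else 0)"

definition wadd :: "(int \<Rightarrow> 'k::field) \<Rightarrow> (int \<Rightarrow> 'k) \<Rightarrow> int \<Rightarrow> 'k" where
  "wadd f g = (\<lambda>m. f m + g m)"

definition wsmult :: "'k::field \<Rightarrow> (int \<Rightarrow> 'k) \<Rightarrow> int \<Rightarrow> 'k" where
  "wsmult c f = (\<lambda>m. c * f m)"

text \<open>Lie bracket, bilinear extension of [L_a, L_b] = (a - b) L_(a+b).\<close>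
definition wbr :: "(int \<Rightarrow> 'k::field) \<Rightarrow> (int \<Rightarrow> 'k) \<Rightarrow> int \<Rightarrow> 'k" where
  "wbr f g = (\<lambda>n. \<Sum>a\<in>{a. f a \<noteq> 0}. of_int (a - (n - a)) * f a * g (n - a))"

definition Osub :: "'k::field \<Rightarrow> (int \<Rightarrow> 'k) set" where
  "Osub lam = {(\<lambda>m. \<Sum>n\<in>S. c n * (wL (int n) m - lam ^ n * wL (- int n) m)) | S c.
                  finite S \<and> S \<subseteq> {1..}}"

definition lie_iso :: "(int \<Rightarrow> 'k::field) set \<Rightarrow> (int \<Rightarrow> 'k) set \<Rightarrow> bool" where
  "lie_iso A B \<longleftrightarrow> (\<exists>\<phi>. bij_betw \<phi> A B \<and>
      (\<forall>x\<in>A. \<forall>y\<in>A. \<phi> (wadd x y) = wadd (\<phi> x) (\<phi> y)) \<and>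
      (\<forall>c. \<forall>x\<in>A. \<phi> (wsmult c x) = wsmult c (\<phi> x)) \<and>
      (\<forall>x\<in>A. \<forall>y\<in>A. \<phi> (wbr x y) = wbr (\<phi> x) (\<phi> y)))"

definition alg_closed_field :: "'k::field itself \<Rightarrow> bool" where
  "alg_closed_field _ \<longleftrightarrow> (\<forall>p :: 'k poly. degree p \<ge> 1 \<longrightarrow> (\<exists>x. poly p x = 0))"

end

theory Submission
  imports Defs
begin


definition Oc :: "'k::field \<Rightarrow> (int \<Rightarrow> 'k) set" where
  "Oc lam = {f. finite {n. f n \<noteq> 0} \<and> f 0 = 0 \<and> (\<forall>n::nat. n \<ge> 1 \<longrightarrow> f (- int n) = - (lam ^ n) * f (int n))}"

lemma Osub_sub_Oc: "Osub lam \<subseteq> Oc lam"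
proof
  fix f assume "f \<in> Osub lam"
  then obtain S c where f: "f = (\<lambda>m. \<Sum>n\<in>S. c n * (wL (int n) m - (lam ^ n) * wL (- int n) m))"
    and S: "finite S" "S \<subseteq> {1..}" unfolding Osub_def by blast
  have supp: "{n. f n \<noteq> 0} \<subseteq> int ` S \<union> (\<lambda>n. - int n) ` S"
  proof
    fix m assume "m \<in> {n. f n \<noteq> 0}"
    then have "(\<Sum>n\<in>S. c n * (wL (int n) m - (lam ^ n) * wL (- int n) m)) \<noteq> 0" using f by simp
    then obtain n where "n \<in> S" "c n * (wL (int n) m - (lam ^ n) * wL (- int n) m) \<noteq> 0"
      using sum.neutral by (metis (no_types, lifting))
    then have "wL (int n) m \<noteq> (0::'a) \<or> wL (- int n) m \<noteq> (0::'a)" by auto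
    then have "m = int n \<or> m = - int n" unfolding wL_def by (auto split: if_splits)
    then show "m \<in> int ` S \<union> (\<lambda>n. - int n) ` S" using \<open>n \<in> S\<close> by auto
  qed
  have fin: "finite {n. f n \<noteq> 0}" by (rule finite_subset[OF supp]) (use S in auto)
  have f0: "f 0 = 0"
  proof -
    have "\<And>n. n \<in> S \<Longrightarrow> c n * (wL (int n) 0 - (lam ^ n) * wL (- int n) 0) = (0::'a)"
      using S unfolding wL_def by auto
    then show ?thesis using f by (simp del: mult_eq_0_iff)
  qed
  have fpos: "f (int k) = (if k \<in> S then c k else 0)" if "k \<ge> 1" for k
  proof -
    have "f (int k) = (\<Sum>n\<in>S. if n = k then c n else 0)"
      unfolding f wL_def using S that by (intro sum.cong) auto
    also have "\<dots> = (if k \<in> S then c k else 0)" using S by (simp add: sum.delta')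
    finally show ?thesis .
  qed
  have fneg: "f (- int k) = - (lam ^ k) * (if k \<in> S then c k else 0)" if "k \<ge> 1" for k
  proof -
    have "f (- int k) = (\<Sum>n\<in>S. if n = k then - (lam ^ k) * c n else 0)"
      unfolding f wL_def using S that by (intro sum.cong) auto
    also have "\<dots> = - (lam ^ k) * (if k \<in> S then c k else 0)" using S by (simp add: sum.delta')
    finally show ?thesis .
  qed
  show "f \<in> Oc lam" unfolding Oc_def using fin f0 fpos fneg by auto
qed

lemma Oc_sub_Osub: "Oc lam \<subseteq> Osub lam"
proof
  fix f assume "f \<in> Oc lam"
  then have fin: "finite {n. f n \<noteq> 0}" and f0: "f 0 = 0"
    and fn: "\<And>n::nat. n \<ge> 1 \<Longrightarrow> f (- int n) = - (lam ^ n) * f (int n)" unfolding Oc_def by auto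
  define S where "S = {n::nat. n \<ge> 1 \<and> f (int n) \<noteq> 0}"
  have "S \<subseteq> int -` {n. f n \<noteq> 0}" unfolding S_def by auto
  moreover have "finite (int -` {n. f n \<noteq> 0})" using fin by (rule finite_vimageI) (simp add: inj_def)
  ultimately have finS: "finite S" by (rule finite_subset)
  have "f = (\<lambda>m. \<Sum>n\<in>S. f (int n) * (wL (int n) m - (lam ^ n) * wL (- int n) m))"
  proof
    fix m :: int
    consider "m = 0" | "m > 0" | "m < 0" by linarith
    then show "f m = (\<Sum>n\<in>S. f (int n) * (wL (int n) m - (lam ^ n) * wL (- int n) m))"
    proof cases
      case 1 then show ?thesis using f0 unfolding wL_def S_def by (auto intro!: sum.neutral)
    next
      case 2
      define k where "k = nat m"
      have k: "m = int k" "k \<ge> 1" using 2 unfolding k_def by auto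
      have "(\<Sum>n\<in>S. f (int n) * (wL (int n) m - (lam ^ n) * wL (- int n) m)) = (\<Sum>n\<in>S. if n = k then f (int n) else 0)"
        unfolding wL_def using k S_def by (intro sum.cong) auto
      also have "\<dots> = f m" using finS k unfolding S_def by (auto simp: sum.delta')
      finally show ?thesis by simp
    next
      case 3
      define k where "k = nat (- m)"
      have k: "m = - int k" "k \<ge> 1" using 3 unfolding k_def by auto
      have "(\<Sum>n\<in>S. f (int n) * (wL (int n) m - (lam ^ n) * wL (- int n) m)) = (\<Sum>n\<in>S. if n = k then - (lam ^ k) * f (int n) else 0)"
        unfolding wL_def using k S_def by (intro sum.cong) auto
      also have "\<dots> = f m" using finS k fn[of k] unfolding S_def by (auto simp: sum.delta')
      finally show ?thesis by simp
    qed
  qed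
  moreover have "S \<subseteq> {1..}" unfolding S_def by auto
  ultimately show "f \<in> Osub lam" unfolding Osub_def using finS by (intro CollectI exI[of _ S] exI[of _ "\<lambda>n. f (int n)"]) auto
qed

lemma Osub_Oc: "Osub lam = Oc lam" using Osub_sub_Oc Oc_sub_Osub by blast



lemma powi_split: "(t::'k::field) \<noteq> 0 \<Longrightarrow> t powi a * t powi (n - a) = t powi n"
proof -
  assume t: "t \<noteq> 0"
  have "t powi (a + (n - a)) = t powi a * t powi (n - a)" using t by (rule power_int_add[OF disjI1])
  then show ?thesis by simp
qed

lemma iso_scale:
  fixes t lam mu :: "'k::field"
  assumes t: "t \<noteq> 0" and lm: "lam = mu * t^2"
  shows "lie_iso (Osub lam) (Osub mu)"
proof -
  define \<phi> where "\<phi> = (\<lambda>(f::int \<Rightarrow> 'k) n. t powi n * f n)"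
  define \<psi> where "\<psi> = (\<lambda>(f::int \<Rightarrow> 'k) n. inverse t powi n * f n)"
  have supp: "{n. \<phi> f n \<noteq> 0} = {n. f n \<noteq> 0}" for f unfolding \<phi>_def using t by auto
  have supp2: "{n. \<psi> f n \<noteq> 0} = {n. f n \<noteq> 0}" for f unfolding \<psi>_def using t by auto
  have phi_in: "\<phi> f \<in> Oc mu" if f: "f \<in> Oc lam" for f
  proof -
    have "\<phi> f (- int k) = - (mu ^ k) * \<phi> f (int k)" if "k \<ge> 1" for k
    proof -
      have A: "f (- int k) = - (lam ^ k) * f (int k)" using f that unfolding Oc_def by auto
      have B: "lam ^ k = mu ^ k * (t ^ k * t ^ k)" unfolding lm by (simp add: power_mult_distrib power2_eq_square)
      have C: "t powi (- int k) = inverse (t ^ k)" by (simp add: power_int_minus)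
      have tk: "t ^ k \<noteq> 0" using t by simp
      show ?thesis unfolding \<phi>_def C A B using tk by (simp add: field_simps)
    qed
    then show ?thesis using f unfolding Oc_def supp by (auto simp: \<phi>_def)
  qed
  have psi_in: "\<psi> f \<in> Oc lam" if f: "f \<in> Oc mu" for f
  proof -
    have "\<psi> f (- int k) = - (lam ^ k) * \<psi> f (int k)" if "k \<ge> 1" for k
    proof -
      have A: "f (- int k) = - (mu ^ k) * f (int k)" using f that unfolding Oc_def by auto
      have B: "lam ^ k = mu ^ k * (t ^ k * t ^ k)" unfolding lm by (simp add: power_mult_distrib power2_eq_square)
      have C: "inverse t powi (- int k) = t ^ k" by (simp add: power_int_minus power_inverse)
      have D: "inverse t powi (int k) = inverse (t ^ k)" by (simp add: power_inverse)
      have tk: "t ^ k \<noteq> 0" using t by simp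
      show ?thesis unfolding \<psi>_def C D A B using tk by (simp add: field_simps)
    qed
    then show ?thesis using f unfolding Oc_def supp2 by (auto simp: \<psi>_def)
  qed
  have pp: "\<psi> (\<phi> f) = f" for f unfolding \<phi>_def \<psi>_def using t
    by (auto simp: power_int_inverse)
  have pp2: "\<phi> (\<psi> f) = f" for f unfolding \<phi>_def \<psi>_def using t
    by (auto simp: power_int_inverse)
  have bij: "bij_betw \<phi> (Osub lam) (Osub mu)"
    unfolding Osub_Oc
    by (rule bij_betw_byWitness[where f'=\<psi>]) (use pp pp2 phi_in psi_in in auto)
  have br: "\<phi> (wbr f g) = wbr (\<phi> f) (\<phi> g)" for f g
  proof
    fix n
    have "\<phi> (wbr f g) n = (\<Sum>a\<in>{a. f a \<noteq> 0}. t powi n * (of_int (a - (n - a)) * f a * g (n - a)))"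
      unfolding \<phi>_def wbr_def by (simp add: sum_distrib_left)
    also have "\<dots> = (\<Sum>a\<in>{a. f a \<noteq> 0}. of_int (a - (n - a)) * (t powi a * f a) * (t powi (n - a) * g (n - a)))"
    proof (intro sum.cong refl)
      fix a
      have eq: "t powi n = t powi a * t powi (n - a)" using powi_split[OF t] by simp
      show "t powi n * (of_int (a - (n - a)) * f a * g (n - a)) = of_int (a - (n - a)) * (t powi a * f a) * (t powi (n - a) * g (n - a))"
        by (subst eq) (simp add: ac_simps)
    qed
    also have "\<dots> = wbr (\<phi> f) (\<phi> g) n" unfolding wbr_def supp by (simp add: \<phi>_def)
    finally show "\<phi> (wbr f g) n = wbr (\<phi> f) (\<phi> g) n" .
  qed
  have ad: "\<phi> (wadd f g) = wadd (\<phi> f) (\<phi> g)" for f g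
    unfolding \<phi>_def wadd_def by (rule ext) (rule distrib_left)
  have sm: "\<phi> (wsmult c f) = wsmult c (\<phi> f)" for c f
    unfolding \<phi>_def wsmult_def by (simp add: ac_simps)
  show ?thesis unfolding lie_iso_def by (intro exI[of _ \<phi>] conjI ballI allI bij br ad sm)
qed



lemma wbr_fin:
  assumes "finite S" "{a. f a \<noteq> 0} \<subseteq> S"
  shows "wbr f g n = (\<Sum>a\<in>S. of_int (a - (n - a)) * f a * g (n - a))"
  unfolding wbr_def by (rule sum.mono_neutral_left) (use assms in auto)

definition wl :: "(int \<times> real) list \<Rightarrow> int \<Rightarrow> real" where
  "wl xs = (\<lambda>m. sum_list (map (\<lambda>(k,c). if k = m then c else 0) xs))"

definition brl :: "(int \<times> real) list \<Rightarrow> (int \<times> real) list \<Rightarrow> (int \<times> real) list" where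
  "brl xs ys = concat (map (\<lambda>(k,c). map (\<lambda>(l,d). (k + l, of_int (k - l) * c * d)) ys) xs)"

lemma wl_Nil [simp]: "wl [] m = 0" by (simp add: wl_def)
lemma wl_Cons [simp]: "wl (x # xs) m = (if fst x = m then snd x else 0) + wl xs m"
  by (simp add: wl_def split: prod.splits)

lemma wl_supp: "{n. wl xs n \<noteq> 0} \<subseteq> set (map fst xs)"
  by (induction xs) auto

lemma wl_sum:
  assumes "finite S" "set (map fst xs) \<subseteq> S"
  shows "(\<Sum>a\<in>S. wl xs a * h a) = sum_list (map (\<lambda>(k,c). c * h k) xs)"
  using assms(2)
proof (induction xs)
  case Nil then show ?case by simp
next
  case (Cons x xs)
  have "(\<Sum>a\<in>S. wl (x # xs) a * h a) = (\<Sum>a\<in>S. (if fst x = a then snd x * h a else 0)) + (\<Sum>a\<in>S. wl xs a * h a)"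
    by (subst sum.distrib[symmetric], rule sum.cong) (auto simp: distrib_right)
  also have "(\<Sum>a\<in>S. (if fst x = a then snd x * h a else 0)) = snd x * h (fst x)"
    using Cons.prems assms(1) by (simp add: sum.delta)
  finally show ?case using Cons by (simp split: prod.splits)
qed

lemma wl_append [simp]: "wl (xs @ ys) m = wl xs m + wl ys m"
  by (induction xs) auto

lemma wl_map: "wl (map (\<lambda>(l,d). (k + l, e l d)) ys) n = sum_list (map (\<lambda>(l,d). if k + l = n then e l d else 0) ys)"
  by (induction ys) (auto split: prod.splits)

lemma brl_Cons: "brl (x # xs) ys = map (\<lambda>(l,d). (fst x + l, of_int (fst x - l) * snd x * d)) ys @ brl xs ys"
  unfolding brl_def by (simp split: prod.splits add: case_prod_beta)

lemma wl_brl: "wl (brl xs ys) n = sum_list (map (\<lambda>(k,c). sum_list (map (\<lambda>(l,d). if k + l = n then of_int (k - l) * c * d else 0) ys)) xs)"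
proof (induction xs)
  case Nil then show ?case by (simp add: brl_def)
next
  case (Cons x xs)
  show ?case
  proof (cases x)
    case (Pair k c)
    show ?thesis using wl_map[of k "\<lambda>l d. of_int (k - l) * c * d" ys n] Cons.IH
      by (simp add: Pair brl_Cons del: of_int_diff)
  qed
qed

lemma wbr_wl: "wbr (wl xs) (wl ys) = wl (brl xs ys)"
proof
  fix n
  have "wbr (wl xs) (wl ys) n = (\<Sum>a\<in>set (map fst xs). wl xs a * (of_int (a - (n - a)) * wl ys (n - a)))"
    by (subst wbr_fin[OF _ wl_supp]) (simp_all add: ac_simps)
  also have "\<dots> = sum_list (map (\<lambda>(k,c). c * (of_int (k - (n - k)) * wl ys (n - k))) xs)"
    by (rule wl_sum) auto
  also have "\<dots> = wl (brl xs ys) n"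
    unfolding wl_brl
  proof (intro arg_cong[where f=sum_list] map_cong refl)
    fix x assume "x \<in> set xs"
    obtain k c where x: "x = (k, c)" by (cases x)
    have "c * (of_int (k - (n - k)) * wl ys (n - k)) = sum_list (map (\<lambda>(l,d). if k + l = n then of_int (k - l) * c * d else 0) ys)"
    proof (induction ys)
      case Nil then show ?case by simp
    next
      case (Cons y ys)
      obtain l d where y: "y = (l, d)" by (cases y)
      show ?case using Cons by (auto simp: y algebra_simps)
    qed
    then show "(case x of (k, c) \<Rightarrow> c * (of_int (k - (n - k)) * wl ys (n - k))) =
      (case x of (k, c) \<Rightarrow> sum_list (map (\<lambda>(l,d). if k + l = n then of_int (k - l) * c * d else 0) ys))"
      by (simp add: x)
  qed
  finally show "wbr (wl xs) (wl ys) n = wl (brl xs ys) n" .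
qed

lemma wl_eqI:
  assumes "\<forall>k \<in> set (map fst xs @ map fst ys). wl xs k = wl ys k"
  shows "wl xs = wl ys"
proof
  fix k
  show "wl xs k = wl ys k"
  proof (cases "k \<in> set (map fst xs @ map fst ys)")
    case True then show ?thesis using assms by blast
  next
    case False
    then have "wl xs k = 0" "wl ys k = 0" using wl_supp[of xs] wl_supp[of ys] by auto
    then show ?thesis by simp
  qed
qed



definition supp :: "(int \<Rightarrow> real) \<Rightarrow> int set" where "supp f = {n. f n \<noteq> 0}"

definition mom :: "nat \<Rightarrow> (int \<Rightarrow> real) \<Rightarrow> real" where
  "mom j f = (\<Sum>n\<in>supp f. f n * of_int n ^ j)"

lemma mom_sup: "finite S \<Longrightarrow> supp f \<subseteq> S \<Longrightarrow> mom j f = (\<Sum>n\<in>S. f n * of_int n ^ j)"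
  unfolding mom_def by (rule sum.mono_neutral_left) (auto simp: supp_def)

lemma supp_wbr: "supp (wbr f g) \<subseteq> (\<lambda>(a,b). a + b) ` (supp f \<times> supp g)"
proof
  fix n assume "n \<in> supp (wbr f g)"
  then have "(\<Sum>a\<in>{a. f a \<noteq> 0}. of_int (a - (n - a)) * f a * g (n - a)) \<noteq> 0"
    by (simp add: supp_def wbr_def)
  then obtain a where "a \<in> {a. f a \<noteq> 0}" "of_int (a - (n - a)) * f a * g (n - a) \<noteq> 0"
    using sum.neutral by (metis (no_types, lifting))
  then have "a \<in> supp f" "n - a \<in> supp g" by (auto simp: supp_def)
  then show "n \<in> (\<lambda>(a,b). a + b) ` (supp f \<times> supp g)" by (force intro: image_eqI[of _ _ "(a, n - a)"])
qed

lemma fin_wbr: "finite (supp f) \<Longrightarrow> finite (supp g) \<Longrightarrow> finite (supp (wbr f g))"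
  by (rule finite_subset[OF supp_wbr]) auto

lemma supp_wadd: "supp (wadd f g) \<subseteq> supp f \<union> supp g" by (auto simp: supp_def wadd_def)
lemma fin_wadd: "finite (supp f) \<Longrightarrow> finite (supp g) \<Longrightarrow> finite (supp (wadd f g))"
  by (rule finite_subset[OF supp_wadd]) auto
lemma supp_wsmult: "supp (wsmult c f) \<subseteq> supp f" by (auto simp: supp_def wsmult_def)
lemma fin_wsmult: "finite (supp f) \<Longrightarrow> finite (supp (wsmult c f))"
  by (rule finite_subset[OF supp_wsmult]) auto

lemma mom_wadd: "finite (supp f) \<Longrightarrow> finite (supp g) \<Longrightarrow> mom j (wadd f g) = mom j f + mom j g"
proof -
  assume ff: "finite (supp f)" and fg: "finite (supp g)"
  let ?S = "supp f \<union> supp g"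
  have "mom j (wadd f g) = (\<Sum>n\<in>?S. wadd f g n * of_int n ^ j)" by (rule mom_sup) (use ff fg supp_wadd in auto)
  also have "\<dots> = (\<Sum>n\<in>?S. f n * of_int n ^ j) + (\<Sum>n\<in>?S. g n * of_int n ^ j)"
    by (simp add: wadd_def distrib_right sum.distrib)
  also have "\<dots> = mom j f + mom j g" using mom_sup[of ?S f j] mom_sup[of ?S g j] ff fg by auto
  finally show ?thesis .
qed

lemma mom_wsmult: "finite (supp f) \<Longrightarrow> mom j (wsmult c f) = c * mom j f"
proof -
  assume ff: "finite (supp f)"
  have "mom j (wsmult c f) = (\<Sum>n\<in>supp f. wsmult c f n * of_int n ^ j)" by (rule mom_sup) (use ff supp_wsmult in auto)
  also have "\<dots> = c * mom j f" unfolding mom_def by (simp add: wsmult_def sum_distrib_left ac_simps)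
  finally show ?thesis .
qed

lemma binom_diff:
  fixes x y :: real
  shows "(x - y) * (x + y) ^ j = (\<Sum>k\<le>j. of_nat (j choose k) * (x ^ Suc k * y ^ (j - k) - x ^ k * y ^ Suc (j - k)))"
proof -
  have "(x - y) * (x + y) ^ j = (\<Sum>k\<le>j. (x - y) * (of_nat (j choose k) * x ^ k * y ^ (j - k)))"
    by (simp add: binomial_ring sum_distrib_left)
  also have "\<dots> = (\<Sum>k\<le>j. of_nat (j choose k) * (x ^ Suc k * y ^ (j - k) - x ^ k * y ^ Suc (j - k)))"
    by (intro sum.cong refl) (simp add: algebra_simps)
  finally show ?thesis .
qed

lemma mom_wbr:
  assumes ff: "finite (supp f)" and fg: "finite (supp g)"
  shows "mom j (wbr f g) = (\<Sum>k\<le>j. of_nat (j choose k) * (mom (Suc k) f * mom (j - k) g - mom k f * mom (Suc (j - k)) g))"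
proof -
  define T where "T = (\<lambda>(a,b). a + b) ` (supp f \<times> supp g)"
  have fT: "finite T" unfolding T_def using ff fg by auto
  have "mom j (wbr f g) = (\<Sum>n\<in>T. wbr f g n * of_int n ^ j)"
    by (rule mom_sup[OF fT]) (simp add: T_def supp_wbr)
  also have "\<dots> = (\<Sum>n\<in>T. \<Sum>a\<in>supp f. of_int (a - (n - a)) * f a * g (n - a) * of_int n ^ j)"
    by (simp add: wbr_def supp_def sum_distrib_right)
  also have "\<dots> = (\<Sum>a\<in>supp f. \<Sum>n\<in>T. of_int (a - (n - a)) * f a * g (n - a) * of_int n ^ j)"
    by (rule sum.swap)
  also have "\<dots> = (\<Sum>a\<in>supp f. \<Sum>b\<in>supp g. of_int (a - b) * f a * g b * of_int (a + b) ^ j)"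
  proof (rule sum.cong[OF refl])
    fix a assume a: "a \<in> supp f"
    have inj: "inj_on ((+) a) (supp g)" by (auto simp: inj_on_def)
    have "(\<Sum>b\<in>supp g. of_int (a - b) * f a * g b * of_int (a + b) ^ j)
        = (\<Sum>b\<in>supp g. of_int (a - ((a + b) - a)) * f a * g ((a + b) - a) * of_int (a + b) ^ j)" by simp
    also have "\<dots> = (\<Sum>n\<in>(+) a ` supp g. of_int (a - (n - a)) * f a * g (n - a) * of_int n ^ j)"
      by (subst sum.reindex[OF inj]) simp
    also have "\<dots> = (\<Sum>n\<in>T. of_int (a - (n - a)) * f a * g (n - a) * of_int n ^ j)"
    proof (rule sum.mono_neutral_left[OF fT])
      show "(+) a ` supp g \<subseteq> T" using a unfolding T_def by force
      show "\<forall>i\<in>T - (+) a ` supp g. of_int (a - (i - a)) * f a * g (i - a) * of_int i ^ j = 0"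
      proof
        fix i assume "i \<in> T - (+) a ` supp g"
        then have "i - a \<notin> supp g" by (metis DiffD2 add_diff_cancel_left' diff_add_cancel image_eqI)
        then show "of_int (a - (i - a)) * f a * g (i - a) * of_int i ^ j = 0" by (simp add: supp_def)
      qed
    qed
    finally show "(\<Sum>n\<in>T. of_int (a - (n - a)) * f a * g (n - a) * of_int n ^ j) = (\<Sum>b\<in>supp g. of_int (a - b) * f a * g b * of_int (a + b) ^ j)" by simp
  qed
  also have "\<dots> = (\<Sum>a\<in>supp f. \<Sum>b\<in>supp g. \<Sum>k\<le>j. of_nat (j choose k) *
        ((f a * of_int a ^ Suc k) * (g b * of_int b ^ (j - k)) - (f a * of_int a ^ k) * (g b * of_int b ^ Suc (j - k))))"
  proof (intro sum.cong refl)
    fix a b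
    have "of_int (a - b) * f a * g b * of_int (a + b) ^ j = f a * g b * ((of_int a - of_int b) * (of_int a + of_int b) ^ j)"
      by (simp add: algebra_simps)
    also have "\<dots> = f a * g b * (\<Sum>k\<le>j. of_nat (j choose k) * (of_int a ^ Suc k * of_int b ^ (j - k) - of_int a ^ k * of_int b ^ Suc (j - k)))"
      by (simp only: binom_diff)
    also have "\<dots> = (\<Sum>k\<le>j. of_nat (j choose k) *
        ((f a * of_int a ^ Suc k) * (g b * of_int b ^ (j - k)) - (f a * of_int a ^ k) * (g b * of_int b ^ Suc (j - k))))"
      by (simp add: sum_distrib_left algebra_simps)
    finally show "of_int (a - b) * f a * g b * of_int (a + b) ^ j = (\<Sum>k\<le>j. of_nat (j choose k) *
        ((f a * of_int a ^ Suc k) * (g b * of_int b ^ (j - k)) - (f a * of_int a ^ k) * (g b * of_int b ^ Suc (j - k))))" .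
  qed
  also have "\<dots> = (\<Sum>k\<le>j. \<Sum>a\<in>supp f. \<Sum>b\<in>supp g. of_nat (j choose k) *
        ((f a * of_int a ^ Suc k) * (g b * of_int b ^ (j - k)) - (f a * of_int a ^ k) * (g b * of_int b ^ Suc (j - k))))"
    by (subst sum.swap, rule sum.cong[OF refl], rule sum.swap)
  also have "\<dots> = (\<Sum>k\<le>j. of_nat (j choose k) * (mom (Suc k) f * mom (j - k) g - mom k f * mom (Suc (j - k)) g))"
  proof (rule sum.cong[OF refl])
    fix k
    show "(\<Sum>a\<in>supp f. \<Sum>b\<in>supp g. of_nat (j choose k) *
        ((f a * of_int a ^ Suc k) * (g b * of_int b ^ (j - k)) - (f a * of_int a ^ k) * (g b * of_int b ^ Suc (j - k))))
        = of_nat (j choose k) * (mom (Suc k) f * mom (j - k) g - mom k f * mom (Suc (j - k)) g)"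
    proof -
      have e1: "mom (Suc k) f * mom (j - k) g = (\<Sum>a\<in>supp f. \<Sum>b\<in>supp g. (f a * of_int a ^ Suc k) * (g b * of_int b ^ (j - k)))"
        unfolding mom_def by (rule sum_product)
      have e2: "mom k f * mom (Suc (j - k)) g = (\<Sum>a\<in>supp f. \<Sum>b\<in>supp g. (f a * of_int a ^ k) * (g b * of_int b ^ Suc (j - k)))"
        unfolding mom_def by (rule sum_product)
      show ?thesis unfolding e1 e2 right_diff_distrib sum_subtractf sum_distrib_left ..
    qed
  qed
  finally show ?thesis .
qed



lemma mom_lead:
  assumes fX: "finite (supp X)" and fY: "finite (supp Y)" and X0: "mom 0 X = 0"
    and Ylow: "\<forall>i<m. mom i Y = 0" and m: "m \<ge> 1"
  shows "(\<forall>i<m. mom i (wbr X Y) = 0) \<and> mom m (wbr X Y) = (1 - of_nat m) * mom 1 X * mom m Y"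
proof (intro conjI allI impI)
  fix i assume i: "i < m"
  have "(\<Sum>k\<le>i. of_nat (i choose k) * (mom (Suc k) X * mom (i - k) Y - mom k X * mom (Suc (i - k)) Y)) = 0"
  proof (rule sum.neutral, rule ballI)
    fix k assume k: "k \<in> {..i}"
    have a: "mom (i - k) Y = 0" using Ylow i by auto
    have b: "mom k X * mom (Suc (i - k)) Y = 0"
    proof (cases k)
      case 0 then show ?thesis using X0 by simp
    next
      case (Suc k') then have "Suc (i - k) < m" using i k by auto
      then show ?thesis using Ylow by simp
    qed
    show "of_nat (i choose k) * (mom (Suc k) X * mom (i - k) Y - mom k X * mom (Suc (i - k)) Y) = 0"
      using a b by simp
  qed
  then show "mom i (wbr X Y) = 0" using mom_wbr[OF fX fY] by simp
next
  have tkeq: "of_nat (m choose k) * (mom (Suc k) X * mom (m - k) Y - mom k X * mom (Suc (m - k)) Y)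
      = (if k = 0 then mom 1 X * mom m Y else 0) - (if k = 1 then of_nat m * mom 1 X * mom m Y else 0)"
    if k: "k \<in> {..m}" for k
  proof -
    consider "k = 0" | "k = 1" | "k \<ge> 2" by linarith
    then show ?thesis
    proof cases
      case 1 then show ?thesis using X0 by simp
    next
      case 2
      have "mom (m - 1) Y = 0" using Ylow m by simp
      moreover have "Suc (m - 1) = m" using m by simp
      ultimately show ?thesis using 2 by simp
    next
      case 3
      have "mom (m - k) Y = 0" using Ylow m 3 by simp
      moreover have "mom (Suc (m - k)) Y = 0" using Ylow m 3 k by simp
      ultimately show ?thesis using 3 by simp
    qed
  qed
  have "mom m (wbr X Y) = (\<Sum>k\<le>m. (if k = 0 then mom 1 X * mom m Y else 0) - (if k = 1 then of_nat m * mom 1 X * mom m Y else 0))"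
    unfolding mom_wbr[OF fX fY] by (rule sum.cong[OF refl]) (rule tkeq)
  also have "\<dots> = mom 1 X * mom m Y - of_nat m * mom 1 X * mom m Y"
    using m by (simp add: sum_subtractf sum.delta)
  also have "\<dots> = (1 - of_nat m) * mom 1 X * mom m Y" by (simp add: algebra_simps)
  finally show "mom m (wbr X Y) = (1 - of_nat m) * mom 1 X * mom m Y" .
qed

lemma mom_low01:
  assumes fP: "finite (supp P)" and fQ: "finite (supp Q)" and "mom 0 P = 0" "mom 0 Q = 0"
  shows "mom 0 (wbr P Q) = 0" "mom 1 (wbr P Q) = 0"
  using assms by (simp_all add: mom_wbr[OF fP fQ] numeral_2_eq_2)

lemma mom_high:
  assumes fV: "finite (supp V)" and fW: "finite (supp W)"
    and Vlow: "\<forall>i<m. mom i V = 0" and W0: "mom 0 W = 0" and W1: "mom 1 W = 0"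
  shows "mom m (wbr V W) = 0"
proof -
  have "(\<Sum>k\<le>m. of_nat (m choose k) * (mom (Suc k) V * mom (m - k) W - mom k V * mom (Suc (m - k)) W)) = 0"
  proof (rule sum.neutral, rule ballI)
    fix k assume k: "k \<in> {..m}"
    have a: "mom (Suc k) V * mom (m - k) W = 0"
    proof (cases "Suc k < m")
      case True then show ?thesis using Vlow by simp
    next
      case False then have "m - k = 0 \<or> m - k = 1" by linarith
      then show ?thesis using W0 W1 by auto
    qed
    have b: "mom k V * mom (Suc (m - k)) W = 0"
    proof (cases "k < m")
      case True then show ?thesis using Vlow by simp
    next
      case False then have "Suc (m - k) = 1" using k by auto
      then show ?thesis using W1 by simp
    qed
    show "of_nat (m choose k) * (mom (Suc k) V * mom (m - k) W - mom k V * mom (Suc (m - k)) W) = 0"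
      unfolding a b by simp
  qed
  then show ?thesis using mom_wbr[OF fV fW] by simp
qed

lemma vander:
  fixes S :: "int set"
  assumes "finite S"
  shows "(\<forall>j. (\<Sum>n\<in>S. Y n * of_int n ^ j) = (0::real)) \<Longrightarrow> \<forall>n\<in>S. Y n = 0"
  using assms
proof (induction S arbitrary: Y rule: finite_induct)
  case empty then show ?case by simp
next
  case (insert s F)
  define Y' where "Y' n = Y n * (of_int n - of_int s)" for n
  have "(\<Sum>n\<in>insert s F. Y' n * of_int n ^ j) = 0" for j
  proof -
    have e: "(\<Sum>n\<in>insert s F. Y' n * of_int n ^ j) = (\<Sum>n\<in>insert s F. Y n * of_int n ^ Suc j) - of_int s * (\<Sum>n\<in>insert s F. Y n * of_int n ^ j)"
      unfolding Y'_def by (simp add: sum_distrib_left sum_subtractf[symmetric] algebra_simps)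
    have h1: "(\<Sum>n\<in>insert s F. Y n * of_int n ^ Suc j) = 0" using insert.prems by blast
    have h2: "(\<Sum>n\<in>insert s F. Y n * of_int n ^ j) = 0" using insert.prems by blast
    show ?thesis unfolding e h1 h2 by simp
  qed
  then have "(\<Sum>n\<in>F. Y' n * of_int n ^ j) = 0" for j using insert.hyps by (simp add: Y'_def)
  then have "\<forall>n\<in>F. Y' n = 0" using insert.IH by blast
  then have F0: "\<forall>n\<in>F. Y n = 0" using insert.hyps unfolding Y'_def by auto
  have "(\<Sum>n\<in>insert s F. Y n * of_int n ^ 0) = 0" using insert.prems by blast
  then have "Y s = 0" using insert.hyps F0 by simp
  then show ?case using F0 by simp
qed

lemma mom_nonzero:
  assumes "finite (supp Y)" "Y \<noteq> (\<lambda>n. 0)"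
  shows "\<exists>j. mom j Y \<noteq> 0"
proof (rule ccontr)
  assume "\<not> (\<exists>j. mom j Y \<noteq> 0)"
  then have "\<forall>j. (\<Sum>n\<in>supp Y. Y n * of_int n ^ j) = 0" unfolding mom_def by simp
  then have "\<forall>n\<in>supp Y. Y n = 0" using vander[OF assms(1)] by blast
  then have "Y = (\<lambda>n. 0)" by (auto simp: supp_def)
  then show False using assms(2) by simp
qed

lemma Oc1_odd: "f \<in> Oc (1::real) \<Longrightarrow> f (- n) = - f n"
proof -
  assume f: "f \<in> Oc (1::real)"
  then have f0: "f 0 = 0" and fk: "\<And>k::nat. k \<ge> 1 \<Longrightarrow> f (- int k) = - f (int k)" unfolding Oc_def by auto
  consider "n = 0" | "n > 0" | "n < 0" by linarith
  then show ?thesis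
  proof cases
    case 1 then show ?thesis using f0 by simp
  next
    case 2 then show ?thesis using fk[of "nat n"] by simp
  next
    case 3 then show ?thesis using fk[of "nat (- n)"] by simp
  qed
qed

lemma Oc1_mom0: "f \<in> Oc (1::real) \<Longrightarrow> mom 0 f = 0"
proof -
  assume f: "f \<in> Oc (1::real)"
  have odd: "\<And>n. f (- n) = - f n" using Oc1_odd[OF f] .
  have im: "uminus ` supp f = supp f"
  proof
    show "uminus ` supp f \<subseteq> supp f" using odd by (auto simp: supp_def)
    show "supp f \<subseteq> uminus ` supp f"
    proof
      fix n assume "n \<in> supp f"
      then have "- n \<in> supp f" using odd by (auto simp: supp_def)
      then show "n \<in> uminus ` supp f" by (force intro: image_eqI[of _ _ "- n"])
    qed
  qed
  have "mom 0 f = (\<Sum>n\<in>supp f. f n)" by (simp add: mom_def)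
  also have "\<dots> = (\<Sum>n\<in>uminus ` supp f. f n)" using im by simp
  also have "\<dots> = (\<Sum>n\<in>supp f. f (- n))" by (subst sum.reindex) (auto simp: inj_on_def)
  also have "\<dots> = - (\<Sum>n\<in>supp f. f n)" using odd by (simp add: sum_negf)
  finally show ?thesis by (simp add: mom_def)
qed

lemma Oc_fin: "f \<in> Oc lam \<Longrightarrow> finite (supp f)" by (simp add: Oc_def supp_def)

lemma A_norel:
  assumes X: "X \<in> Oc (1::real)" and Y: "Y \<in> Oc 1" and P: "P \<in> Oc 1" and Q: "Q \<in> Oc 1"
    and R: "R \<in> Oc 1" and S: "S \<in> Oc 1" and Yne: "Y \<noteq> (\<lambda>n. 0)" and c: "c > 0"
  shows "wadd (wbr X (wbr X Y)) (wsmult c Y) \<noteq> wadd (wbr Y (wbr P Q)) (wbr (wbr X Y) (wbr R S))"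
proof
  assume eq: "wadd (wbr X (wbr X Y)) (wsmult c Y) = wadd (wbr Y (wbr P Q)) (wbr (wbr X Y) (wbr R S))"
  note fX = Oc_fin[OF X] and fY = Oc_fin[OF Y] and fP = Oc_fin[OF P] and fQ = Oc_fin[OF Q]
    and fR = Oc_fin[OF R] and fS = Oc_fin[OF S]
  have fXY: "finite (supp (wbr X Y))" using fX fY by (rule fin_wbr)
  have fXXY: "finite (supp (wbr X (wbr X Y)))" using fX fXY by (rule fin_wbr)
  have fPQ: "finite (supp (wbr P Q))" using fP fQ by (rule fin_wbr)
  have fRS: "finite (supp (wbr R S))" using fR fS by (rule fin_wbr)
  obtain j0 where "mom j0 Y \<noteq> 0" using mom_nonzero[OF fY Yne] by blast
  define m where "m = (LEAST j. mom j Y \<noteq> 0)"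
  have mY: "mom m Y \<noteq> 0" unfolding m_def by (rule LeastI) fact
  have Ylow: "\<forall>i<m. mom i Y = 0" unfolding m_def using not_less_Least by blast
  have m1: "m \<ge> 1" using mY Oc1_mom0[OF Y] by (cases m) auto
  have X0: "mom 0 X = 0" by (rule Oc1_mom0[OF X])
  from mom_lead[OF fX fY X0 Ylow m1]
  have XYlow: "\<forall>i<m. mom i (wbr X Y) = 0" and XYm: "mom m (wbr X Y) = (1 - of_nat m) * mom 1 X * mom m Y" by auto
  from mom_lead[OF fX fXY X0 XYlow m1]
  have XXYm: "mom m (wbr X (wbr X Y)) = (1 - of_nat m) * mom 1 X * ((1 - of_nat m) * mom 1 X * mom m Y)"
    using XYm by simp
  have PQ: "mom 0 (wbr P Q) = 0" "mom 1 (wbr P Q) = 0"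
    using mom_low01[OF fP fQ Oc1_mom0[OF P] Oc1_mom0[OF Q]] by auto
  have RS: "mom 0 (wbr R S) = 0" "mom 1 (wbr R S) = 0"
    using mom_low01[OF fR fS Oc1_mom0[OF R] Oc1_mom0[OF S]] by auto
  have r1: "mom m (wbr Y (wbr P Q)) = 0" using mom_high[OF fY fPQ Ylow PQ] .
  have r2: "mom m (wbr (wbr X Y) (wbr R S)) = 0" using mom_high[OF fXY fRS XYlow RS] .
  have "mom m (wadd (wbr X (wbr X Y)) (wsmult c Y)) = ((1 - of_nat m) * mom 1 X) ^ 2 * mom m Y + c * mom m Y"
    using mom_wadd[OF fXXY fin_wsmult[OF fY]] mom_wsmult[OF fY] XXYm by (simp add: power2_eq_square algebra_simps)
  moreover have "mom m (wadd (wbr Y (wbr P Q)) (wbr (wbr X Y) (wbr R S))) = 0"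
    using mom_wadd[OF fin_wbr[OF fY fPQ] fin_wbr[OF fXY fRS]] r1 r2 by simp
  ultimately have "(((1 - of_nat m) * mom 1 X) ^ 2 + c) * mom m Y = 0" using eq by (simp add: algebra_simps)
  moreover have "((1 - of_nat m) * mom 1 X) ^ 2 + c > 0" using c by (simp add: add_nonneg_pos)
  ultimately show False using mY by simp
qed



lemma brl_Nil [simp]: "brl [] ys = []" by (simp add: brl_def)

definition mirror :: "(int \<times> real) list \<Rightarrow> (int \<times> real) list" where
  "mirror xs = map (\<lambda>(k,c). (- k, - ((-1) ^ nat \<bar>k\<bar>) * c)) xs"

lemma wl_mirror: "wl (mirror xs) m = - ((-1) ^ nat \<bar>m\<bar>) * wl xs (- m)"
proof (induction xs)
  case Nil then show ?case by (simp add: mirror_def)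
next
  case (Cons x xs)
  obtain k c where x: "x = (k, c)" by (cases x)
  have e1: "wl (mirror (x # xs)) m = (if - k = m then - ((-1) ^ nat \<bar>k\<bar>) * c else 0) + wl (mirror xs) m"
    by (simp add: mirror_def x)
  have e2: "(if - k = m then - ((-1) ^ nat \<bar>k\<bar>) * c else 0) = - ((-1) ^ nat \<bar>m\<bar>) * (if k = - m then c else 0)"
    by auto
  show ?case unfolding e1 e2 Cons.IH wl_Cons unfolding x fst_conv snd_conv by (rule distrib_left[symmetric])
qed

lemma wl_Oc:
  assumes "wl (mirror xs) = wl xs" "wl xs 0 = 0"
  shows "wl xs \<in> Oc (-1)"
proof -
  have fin: "finite {n. wl xs n \<noteq> 0}" by (rule finite_subset[OF wl_supp]) auto
  have "wl xs (- int n) = - ((-1) ^ n) * wl xs (int n)" if "n \<ge> 1" for n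
  proof -
    have "wl xs (- int n) = wl (mirror xs) (- int n)" using assms(1) by simp
    also have "\<dots> = - ((-1) ^ n) * wl xs (int n)" by (simp add: wl_mirror)
    finally show ?thesis .
  qed
  then show ?thesis unfolding Oc_def using fin assms(2) by auto
qed

lemma wsmult_wl: "wsmult c (wl xs) = wl (map (\<lambda>(k,d). (k, c * d)) xs)"
proof
  fix m show "wsmult c (wl xs) m = wl (map (\<lambda>(k,d). (k, c * d)) xs) m"
    by (induction xs) (auto simp: wsmult_def algebra_simps split: prod.splits)
qed

lemma wadd_wl: "wadd (wl xs) (wl ys) = wl (xs @ ys)"
  by (auto simp: wadd_def)

definition "xl = [(1::int, 1::real), (-1, 1)]"
definition "yl = [(5::int, 1::real), (3, 5), (1, 10), (-1, 10), (-3, 5), (-5, 1)]"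
definition "ql = [(3::int, 15/8::real), (-3, 15/8), (1, -15/8), (-1, -15/8)]"
definition "sl = [(2::int, 5/16::real), (-2, -5/16)]"
definition "xyl = [(-6::int, 4::real), (-4, 16), (-2, 20), (2, -20), (4, -16), (6, -4)]"
definition "xxyl = [(-7::int, 20::real), (-5, 76), (-3, 100), (-1, 60), (1, 60), (3, 100), (5, 76), (7, 20)]"
definition "pql = [(-4::int, 15/4::real), (-2, 15/2), (2, -15/2), (4, -15/4)]"
definition "rsl = [(-3::int, -5/16::real), (-1, -15/16), (1, -15/16), (3, -5/16)]"

lemma br_xy: "wbr (wl xl) (wl yl) = wl xyl"
  unfolding wbr_wl by (rule wl_eqI) (simp add: xl_def yl_def xyl_def brl_Cons)
lemma br_xxy: "wbr (wl xl) (wl xyl) = wl xxyl"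
  unfolding wbr_wl by (rule wl_eqI) (simp add: xl_def xxyl_def xyl_def brl_Cons)
lemma br_pq: "wbr (wl xl) (wl ql) = wl pql"
  unfolding wbr_wl by (rule wl_eqI) (simp add: xl_def ql_def pql_def brl_Cons)
lemma br_rs: "wbr (wl xl) (wl sl) = wl rsl"
  unfolding wbr_wl by (rule wl_eqI) (simp add: xl_def sl_def rsl_def brl_Cons)

lemma rel: "wadd (wl xxyl) (wsmult 64 (wl yl)) = wadd (wbr (wl yl) (wl pql)) (wbr (wl xyl) (wl rsl))"
  unfolding wbr_wl wsmult_wl wadd_wl
  by (rule wl_eqI) (simp add: yl_def pql_def xyl_def xxyl_def rsl_def brl_Cons)

lemma mem_B:
  "wl xl \<in> Oc (-1)" "wl yl \<in> Oc (-1)" "wl ql \<in> Oc (-1)" "wl sl \<in> Oc (-1)"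
  "wl xyl \<in> Oc (-1)" "wl xxyl \<in> Oc (-1)" "wl pql \<in> Oc (-1)" "wl rsl \<in> Oc (-1)"
  "wsmult 64 (wl yl) \<in> Oc (-1)" "wbr (wl yl) (wl pql) \<in> Oc (-1)" "wbr (wl xyl) (wl rsl) \<in> Oc (-1)"
  unfolding wbr_wl wsmult_wl
  by (rule wl_Oc; (rule wl_eqI)?; simp add: mirror_def xl_def yl_def ql_def sl_def xyl_def xxyl_def pql_def rsl_def brl_Cons)+

lemma yl_ne: "wl yl \<noteq> (\<lambda>n. 0)"
proof
  assume "wl yl = (\<lambda>n. 0)"
  then have "wl yl 5 = 0" by simp
  then show False by (simp add: yl_def)
qed



theorem corollary4p23:
  shows "(\<forall>lam :: 'k :: field_char_0. alg_closed_field TYPE('k) \<longrightarrow> lam \<noteq> 0 \<longrightarrow>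
            lie_iso (Osub lam) (Osub 1))
       \<and> (\<forall>lam :: real. lam > 0 \<longrightarrow> lie_iso (Osub lam) (Osub 1))
       \<and> (\<forall>lam :: real. lam < 0 \<longrightarrow> lie_iso (Osub lam) (Osub (-1)))
       \<and> \<not> lie_iso (Osub (-1 :: real)) (Osub 1)"
proof (intro conjI allI impI)
  fix lam :: "'k :: field_char_0"
  assume ac: "alg_closed_field TYPE('k)" and l: "lam \<noteq> 0"
  have "degree [:-lam, 0, 1:] \<ge> 1" by simp
  then obtain t where "poly [:-lam, 0, 1:] t = 0" using ac unfolding alg_closed_field_def by blast
  then have tt: "t * t = lam" by (simp add: algebra_simps)
  then have "t \<noteq> 0" using l by auto
  moreover have "lam = 1 * t^2" using tt by (simp add: power2_eq_square)
  ultimately show "lie_iso (Osub lam) (Osub 1)" by (rule iso_scale)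
next
  fix lam :: real assume "lam > 0"
  then show "lie_iso (Osub lam) (Osub 1)" by (intro iso_scale[of "sqrt lam"]) auto
next
  fix lam :: real assume "lam < 0"
  then show "lie_iso (Osub lam) (Osub (-1))" by (intro iso_scale[of "sqrt (- lam)"]) auto
next
  show "\<not> lie_iso (Osub (-1 :: real)) (Osub 1)"
  proof
    assume "lie_iso (Osub (-1 :: real)) (Osub 1)"
    then obtain \<phi> where bij: "bij_betw \<phi> (Oc (-1)) (Oc (1::real))"
      and ad: "\<And>u v. u \<in> Oc (-1) \<Longrightarrow> v \<in> Oc (-1) \<Longrightarrow> \<phi> (wadd u v) = wadd (\<phi> u) (\<phi> v)"
      and sm: "\<And>c u. u \<in> Oc (-1) \<Longrightarrow> \<phi> (wsmult c u) = wsmult c (\<phi> u)"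
      and br: "\<And>u v. u \<in> Oc (-1) \<Longrightarrow> v \<in> Oc (-1) \<Longrightarrow> \<phi> (wbr u v) = wbr (\<phi> u) (\<phi> v)"
      unfolding lie_iso_def Osub_Oc by blast
    have inA: "\<phi> u \<in> Oc 1" if "u \<in> Oc (-1)" for u using bij that by (rule bij_betw_apply)
    let ?x = "wl xl" and ?y = "wl yl" and ?q = "wl ql" and ?s = "wl sl"
    note mem = mem_B
    have mxy: "wbr ?x ?y \<in> Oc (-1)" unfolding br_xy by (rule mem(5))
    have mxxy: "wbr ?x (wbr ?x ?y) \<in> Oc (-1)" unfolding br_xy br_xxy by (rule mem(6))
    have mpq: "wbr ?x ?q \<in> Oc (-1)" unfolding br_pq by (rule mem(7))
    have mrs: "wbr ?x ?s \<in> Oc (-1)" unfolding br_rs by (rule mem(8))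
    have m1: "wbr ?y (wbr ?x ?q) \<in> Oc (-1)" unfolding br_pq by (rule mem(10))
    have m2: "wbr (wbr ?x ?y) (wbr ?x ?s) \<in> Oc (-1)" unfolding br_xy br_rs by (rule mem(11))
    have eqB: "wadd (wbr ?x (wbr ?x ?y)) (wsmult 64 ?y) = wadd (wbr ?y (wbr ?x ?q)) (wbr (wbr ?x ?y) (wbr ?x ?s))"
      unfolding br_xy br_xxy br_pq br_rs by (rule rel)
    have "\<phi> (wadd (wbr ?x (wbr ?x ?y)) (wsmult 64 ?y)) = wadd (\<phi> (wbr ?x (wbr ?x ?y))) (\<phi> (wsmult 64 ?y))"
      by (rule ad[OF mxxy mem(9)])
    also have "\<phi> (wbr ?x (wbr ?x ?y)) = wbr (\<phi> ?x) (\<phi> (wbr ?x ?y))" by (rule br[OF mem(1) mxy])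
    also have "\<phi> (wbr ?x ?y) = wbr (\<phi> ?x) (\<phi> ?y)" by (rule br[OF mem(1) mem(2)])
    also have "\<phi> (wsmult 64 ?y) = wsmult 64 (\<phi> ?y)" by (rule sm[OF mem(2)])
    finally have L: "\<phi> (wadd (wbr ?x (wbr ?x ?y)) (wsmult 64 ?y)) = wadd (wbr (\<phi> ?x) (wbr (\<phi> ?x) (\<phi> ?y))) (wsmult 64 (\<phi> ?y))" .
    have "\<phi> (wadd (wbr ?y (wbr ?x ?q)) (wbr (wbr ?x ?y) (wbr ?x ?s))) = wadd (\<phi> (wbr ?y (wbr ?x ?q))) (\<phi> (wbr (wbr ?x ?y) (wbr ?x ?s)))"
      by (rule ad[OF m1 m2])
    also have "\<phi> (wbr ?y (wbr ?x ?q)) = wbr (\<phi> ?y) (\<phi> (wbr ?x ?q))" by (rule br[OF mem(2) mpq])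
    also have "\<phi> (wbr ?x ?q) = wbr (\<phi> ?x) (\<phi> ?q)" by (rule br[OF mem(1) mem(3)])
    also have "\<phi> (wbr (wbr ?x ?y) (wbr ?x ?s)) = wbr (\<phi> (wbr ?x ?y)) (\<phi> (wbr ?x ?s))" by (rule br[OF mxy mrs])
    also have "\<phi> (wbr ?x ?y) = wbr (\<phi> ?x) (\<phi> ?y)" by (rule br[OF mem(1) mem(2)])
    also have "\<phi> (wbr ?x ?s) = wbr (\<phi> ?x) (\<phi> ?s)" by (rule br[OF mem(1) mem(4)])
    finally have R: "\<phi> (wadd (wbr ?y (wbr ?x ?q)) (wbr (wbr ?x ?y) (wbr ?x ?s)))
        = wadd (wbr (\<phi> ?y) (wbr (\<phi> ?x) (\<phi> ?q))) (wbr (wbr (\<phi> ?x) (\<phi> ?y)) (wbr (\<phi> ?x) (\<phi> ?s)))" .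
    have z: "(\<lambda>n. 0::real) \<in> Oc (-1)" by (simp add: Oc_def)
    have "\<phi> (\<lambda>n. 0) = \<phi> (wsmult 0 (\<lambda>n. 0))" by (simp add: wsmult_def)
    also have "\<dots> = wsmult 0 (\<phi> (\<lambda>n. 0))" by (rule sm[OF z])
    also have "\<dots> = (\<lambda>n. 0)" by (simp add: wsmult_def)
    finally have phi0: "\<phi> (\<lambda>n. 0) = (\<lambda>n. 0)" .
    have Yne: "\<phi> ?y \<noteq> (\<lambda>n. 0)"
    proof
      assume "\<phi> ?y = (\<lambda>n. 0)"
      then have "\<phi> ?y = \<phi> (\<lambda>n. 0)" using phi0 by simp
      then have "?y = (\<lambda>n. 0)" using inj_onD[OF bij_betw_imp_inj_on[OF bij] _ mem(2) z] by blast
      then show False using yl_ne by simp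
    qed
    have "wadd (wbr (\<phi> ?x) (wbr (\<phi> ?x) (\<phi> ?y))) (wsmult 64 (\<phi> ?y))
        \<noteq> wadd (wbr (\<phi> ?y) (wbr (\<phi> ?x) (\<phi> ?q))) (wbr (wbr (\<phi> ?x) (\<phi> ?y)) (wbr (\<phi> ?x) (\<phi> ?s)))"
      by (rule A_norel[OF inA[OF mem(1)] inA[OF mem(2)] inA[OF mem(1)] inA[OF mem(3)] inA[OF mem(1)] inA[OF mem(4)] Yne]) simp
    then show False using L R eqB by simp
  qed
qed

end
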